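(* For $k\in\mathbb{N}$, the sequence $\{\varphi_{k,n}\}_{n=2}^\infty$ defined by $$\varphi_{k,n}=n\prod_{j=0}^{k-1}\ell_j(n)\,\big[\ell_k(n)-\ell_k(n-1)\big]-1$$ is positive, decreasing, and $\lim_{n\to\infty}\varphi_{k,n}=0$.
   Context: For $x\ge1$ define $\ell_0(x)=1$, $\ell_1(x)=1+\ln x$, and recursively $\ell_j(x)=1+\ln\ell_{j-1}(x)$ for $j\ge2$. *)

theory Defs
  imports "HOL-Analysis.Analysis"
begin

fun ell :: "nat \<Rightarrow> real \<Rightarrow> real" where
  "ell 0 x = 1"
| "ell (Suc 0) x = 1 + ln x"
| "ell (Suc (Suc j)) x = 1 + ln (ell (Suc j) x)"

definition phi :: "nat \<Rightarrow> nat \<Rightarrow> real" where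
  "phi k n = real n * (\<Prod>j<k. ell j (real n)) * (ell k (real n) - ell k (real n - 1)) - 1"

end

theory Submission
  imports Defs
begin

definition FF :: "nat \<Rightarrow> real \<Rightarrow> real" where
  "FF k x = x * (\<Prod>j<k. ell j x)"

definition UU :: "nat \<Rightarrow> real \<Rightarrow> real" where
  "UU k x = ln x + (\<Sum>j<k. ln (ell j x))"

definition TT :: "nat \<Rightarrow> real \<Rightarrow> real" where
  "TT j x = (if j = 0 then 0 else 1 / FF (Suc j) x)"

lemma ell_ge1: "x \<ge> 1 \<Longrightarrow> ell j x \<ge> 1"
  by (induction j x rule: ell.induct) auto

lemma ell_mono: "1 \<le> x \<Longrightarrow> x \<le> y \<Longrightarrow> ell j x \<le> ell j y"
proof (induction j x rule: ell.induct)
  case (3 j x)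
  then show ?case using ell_ge1[of x "Suc j"] by simp
qed auto

lemma prod_ge1: "x \<ge> 1 \<Longrightarrow> (\<Prod>j<k. ell j x) \<ge> 1"
  by (rule prod_ge_1) (simp add: ell_ge1)

lemma FF_ge: "x \<ge> 1 \<Longrightarrow> FF k x \<ge> x"
  unfolding FF_def using prod_ge1[of x k] by (simp add: mult_le_cancel_left1)

lemma FF_less: "1 \<le> x \<Longrightarrow> x < y \<Longrightarrow> FF k x < FF k y"
proof -
  assume a: "1 \<le> x" "x < y"
  have "(\<Prod>j<k. ell j x) \<le> (\<Prod>j<k. ell j y)"
    by (rule prod_mono) (metis ell_ge1 ell_mono a less_imp_le order.trans zero_le_one)
  moreover have "(\<Prod>j<k. ell j x) \<ge> 1" using prod_ge1 a by auto
  ultimately show ?thesis unfolding FF_def using a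
    by (smt (verit) mult_less_cancel_right mult_left_mono)
qed

lemma FF_Suc: "FF (Suc k) x = FF k x * ell k x"
  unfolding FF_def by simp

lemma ell_deriv: "x \<ge> 1 \<Longrightarrow> (ell (Suc j) has_real_derivative 1 / FF (Suc j) x) (at x)"
proof (induction j arbitrary: x)
  case 0
  have e: "ell (Suc 0) = (\<lambda>x. 1 + ln x)" by (rule ext) simp
  show ?case unfolding e FF_def using 0
    by (auto intro!: derivative_eq_intros)
next
  case (Suc j)
  have e: "ell (Suc (Suc j)) = (\<lambda>x. 1 + ln (ell (Suc j) x))" by (rule ext) simp
  have p: "ell (Suc j) x > 0" using ell_ge1[OF Suc.prems, of "Suc j"] by simp
  have fp: "FF (Suc j) x > 0" using FF_ge[OF Suc.prems, of "Suc j"] Suc.prems by simp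
  have "((\<lambda>x. ln (ell (Suc j) x)) has_real_derivative inverse (ell (Suc j) x) * (1 / FF (Suc j) x)) (at x)"
    by (rule DERIV_chain2[OF DERIV_ln[OF p] Suc.IH[OF Suc.prems]])
  then have "((\<lambda>x. 1 + ln (ell (Suc j) x)) has_real_derivative 0 + inverse (ell (Suc j) x) * (1 / FF (Suc j) x)) (at x)"
    by (intro DERIV_add DERIV_const)
  then show ?case unfolding e
    using p fp by (simp add: FF_Suc[of "Suc j"] field_simps)
qed

lemma lnell_deriv: "x \<ge> 1 \<Longrightarrow> ((\<lambda>x. ln (ell j x)) has_real_derivative TT j x) (at x)"
proof (cases j)
  case 0
  then show ?thesis by (simp add: TT_def)
next
  case (Suc i)
  assume x: "x \<ge> 1"
  have p: "ell j x > 0" using ell_ge1[OF x, of j] by simp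
  have fp: "FF j x > 0" using FF_ge[OF x, of j] x by simp
  have p': "ell (Suc i) x > 0" using p Suc by simp
  have "((\<lambda>x. ln (ell (Suc i) x)) has_real_derivative inverse (ell (Suc i) x) * (1 / FF (Suc i) x)) (at x)"
    by (rule DERIV_chain2[OF DERIV_ln[OF p'] ell_deriv[OF x]])
  then show ?thesis unfolding Suc
    using p fp Suc by (simp add: TT_def FF_Suc[of "Suc i"] field_simps)
qed

lemma UU_deriv: "x \<ge> 1 \<Longrightarrow> (UU k has_real_derivative (1/x + (\<Sum>j<k. TT j x))) (at x)"
proof -
  assume x: "x \<ge> 1"
  have "((\<lambda>x. \<Sum>j<k. ln (ell j x)) has_real_derivative (\<Sum>j<k. TT j x)) (at x)"
    by (rule DERIV_sum) (rule lnell_deriv[OF x])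
  moreover have "(ln has_real_derivative inverse x) (at x)" using x by (intro DERIV_ln) simp
  ultimately show ?thesis unfolding UU_def using DERIV_add by (fastforce simp: field_simps)
qed

lemma UU_eq: "x \<ge> 1 \<Longrightarrow> UU k x = ln (FF k x)"
proof -
  assume x: "x \<ge> 1"
  have pos: "\<And>j. ell j x > 0" using ell_ge1[OF x] by (meson less_le_trans zero_less_one)
  have pp: "(\<Prod>j<k. ell j x) > 0" using pos by (simp add: prod_pos)
  have "ln (\<Prod>j<k. ell j x) = (\<Sum>j<k. ln (ell j x))"
    by (rule ln_prod) (simp, metis pos less_irrefl)
  moreover have "ln (FF k x) = ln x + ln (\<Prod>j<k. ell j x)"
    unfolding FF_def by (rule ln_mult_pos) (use x pp in auto)
  ultimately show ?thesis by (simp add: UU_def)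
qed

lemma TT_mono: "1 \<le> x \<Longrightarrow> x \<le> y \<Longrightarrow> TT j y \<le> TT j x"
  unfolding TT_def using FF_less[of x y "Suc j"] FF_ge[of x "Suc j"]
  by (cases "x = y") (auto simp: frac_le)

lemma TT_le: "1 \<le> x \<Longrightarrow> TT j x \<le> 1/x"
  unfolding TT_def using FF_ge[of x "Suc j"]
  by (auto simp: frac_le)

lemma UUd_less: "1 \<le> x \<Longrightarrow> x < y \<Longrightarrow> 1/y + (\<Sum>j<k. TT j y) < 1/x + (\<Sum>j<k. TT j x)"
proof -
  assume a: "1 \<le> x" "x < y"
  have "(\<Sum>j<k. TT j y) \<le> (\<Sum>j<k. TT j x)"
    by (rule sum_mono) (use a TT_mono in auto)
  moreover have "1/y < 1/x" using a by (simp add: frac_less2)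
  ultimately show ?thesis by simp
qed


lemma ell_deriv_chain:
  assumes "(g has_real_derivative g') (at t)" "g t \<ge> 1"
  shows "((\<lambda>t. ell (Suc j) (g t)) has_real_derivative (1 / FF (Suc j) (g t)) * g') (at t)"
  using DERIV_chain2[OF ell_deriv[OF assms(2)] assms(1)] .

lemma key:
  assumes "b \<ge> 1" "s > 0"
  shows "FF k (b+s+1) / FF k (b+1) < FF k (b+s) / FF k b"
proof -
  define d where "d y = 1/y + (\<Sum>j<k. TT j y)" for y
  have "\<exists>z. b < z \<and> z < b+1 \<and> (UU k ((b+1)+s) - UU k (b+1)) - (UU k (b+s) - UU k b)
          = ((b+1) - b) * (d (z+s) - d z)"
  proof (rule MVT2)
    fix y assume y: "b \<le> y" "y \<le> b+1"
    show "((\<lambda>y. UU k (y+s) - UU k y) has_real_derivative d (y+s) - d y) (at y)"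
    proof -
      have a: "((\<lambda>y. y + s) has_real_derivative 1) (at y)"
        by (auto intro!: derivative_eq_intros)
      have "((\<lambda>y. UU k (y+s)) has_real_derivative d (y+s) * 1) (at y)"
        unfolding d_def by (rule DERIV_chain2[OF UU_deriv a]) (use y assms in simp)
      moreover have "(UU k has_real_derivative d y) (at y)"
        unfolding d_def by (rule UU_deriv) (use y assms in simp)
      ultimately show ?thesis using DERIV_diff by fastforce
    qed
  qed simp
  then obtain z where z: "b < z" "(UU k (b+1+s) - UU k (b+1)) - (UU k (b+s) - UU k b) = d (z+s) - d z"
    by auto
  have "d (z+s) < d z" unfolding d_def by (rule UUd_less) (use z assms in auto)
  then have "UU k (b+s+1) - UU k (b+1) < UU k (b+s) - UU k b" using z by (simp add: add_ac)
  then have "ln (FF k (b+s+1)) - ln (FF k (b+1)) < ln (FF k (b+s)) - ln (FF k b)"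
    using assms by (simp add: UU_eq)
  moreover have P: "\<And>y. y \<ge> 1 \<Longrightarrow> FF k y > 0" using FF_ge by (meson less_le_trans zero_less_one)
  have p1: "FF k (b+s+1) > 0" "FF k (b+1) > 0" "FF k (b+s) > 0" "FF k b > 0"
    using assms by (auto intro!: P)
  ultimately have "ln (FF k (b+s+1) / FF k (b+1)) < ln (FF k (b+s) / FF k b)"
    using p1 by (simp add: ln_div)
  then show ?thesis using p1 by (simp add: ln_less_cancel_iff)
qed


lemma FF_pos: "x \<ge> 1 \<Longrightarrow> FF k x > 0"
  using FF_ge by (meson less_le_trans zero_less_one)

lemma phi_eq: "phi k n = FF k (real n) * (ell k (real n) - ell k (real n - 1)) - 1"
  unfolding phi_def FF_def by (simp add: mult.assoc)

lemma step_mvt: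
  assumes "k \<ge> 1" "x \<ge> 2"
  shows "\<exists>z. x - 1 < z \<and> z < x \<and> ell k x - ell k (x - 1) = 1 / FF k z"
proof -
  obtain k' where k: "k = Suc k'" using assms(1) by (cases k) auto
  have "\<exists>z. x - 1 < z \<and> z < x \<and> ell k x - ell k (x - 1) = (x - (x - 1)) * (1 / FF k z)"
    unfolding k by (rule MVT2) (use assms in \<open>auto intro!: ell_deriv\<close>)
  then show ?thesis by simp
qed

lemma phi_pos:
  assumes "k \<ge> 1" "n \<ge> 2"
  shows "phi k n > 0"
proof -
  have x: "real n \<ge> 2" using assms by simp
  obtain z where z: "real n - 1 < z" "z < real n" "ell k (real n) - ell k (real n - 1) = 1 / FF k z"
    using step_mvt[OF assms(1) x] by auto
  have "FF k z < FF k (real n)" by (rule FF_less) (use z x in auto)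
  moreover have "FF k z > 0" by (rule FF_pos) (use z x in auto)
  ultimately show ?thesis unfolding phi_eq z(3) by simp
qed

lemma phi_dec:
  assumes "k \<ge> 1" "x \<ge> 2"
  shows "FF k (x+1) * (ell k (x+1) - ell k x) < FF k x * (ell k x - ell k (x - 1))"
proof -
  obtain k' where k: "k = Suc k'" using assms(1) by (cases k) auto
  define G where "G t = FF k (x+1) * (ell k (x+1) - ell k (x+1-t)) - FF k x * (ell k x - ell k (x-t))" for t
  define G' where "G' t = FF k (x+1) / FF k (x+1-t) - FF k x / FF k (x-t)" for t
  have "\<exists>z. 0 < z \<and> z < 1 \<and> G 1 - G 0 = (1 - 0) * G' z"
  proof (rule MVT2)
    fix t :: real assume t: "0 \<le> t" "t \<le> 1"
    have g1: "((\<lambda>t. x + 1 - t) has_real_derivative -1) (at t)"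
      by (auto intro!: derivative_eq_intros)
    have g2: "((\<lambda>t. x - t) has_real_derivative -1) (at t)"
      by (auto intro!: derivative_eq_intros)
    have d1: "((\<lambda>t. ell k (x + 1 - t)) has_real_derivative (1 / FF k (x+1-t)) * -1) (at t)"
      unfolding k by (rule ell_deriv_chain[OF g1]) (use t assms in simp)
    have d2: "((\<lambda>t. ell k (x - t)) has_real_derivative (1 / FF k (x-t)) * -1) (at t)"
      unfolding k by (rule ell_deriv_chain[OF g2]) (use t assms in simp)
    have "(G has_real_derivative
        FF k (x+1) * (0 - (1 / FF k (x+1-t)) * -1) - FF k x * (0 - (1 / FF k (x-t)) * -1)) (at t)"
      unfolding G_def
      by (intro DERIV_diff DERIV_cmult DERIV_const d1 d2)
    then show "(G has_real_derivative G' t) (at t)" unfolding G'_def by simp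
  qed simp
  then obtain z where z: "0 < z" "z < 1" "G 1 - G 0 = G' z" by auto
  have "FF k (x - z + z + 1) / FF k (x - z + 1) < FF k (x - z + z) / FF k (x - z)"
    by (rule key) (use z assms in auto)
  then have "G' z < 0" unfolding G'_def by (simp add: algebra_simps)
  moreover have "G 0 = 0" unfolding G_def by simp
  ultimately have "G 1 < 0" using z by simp
  then show ?thesis unfolding G_def by simp
qed

lemma phi_bound:
  assumes "k \<ge> 1" "n \<ge> 2"
  shows "phi k n \<le> exp ((real k + 1) / (real n - 1)) - 1"
proof -
  have x: "real n \<ge> 2" using assms by simp
  obtain z where z: "real n - 1 < z" "z < real n" "ell k (real n) - ell k (real n - 1) = 1 / FF k z"
    using step_mvt[OF assms(1) x] by auto
  have p1: "FF k (real n - 1) > 0" "FF k (real n) > 0" using x by (auto intro!: FF_pos)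
  have "FF k (real n - 1) < FF k z" by (rule FF_less) (use z x in auto)
  then have "FF k (real n) / FF k z \<le> FF k (real n) / FF k (real n - 1)"
    using p1 by (intro divide_left_mono) auto
  then have A: "phi k n \<le> FF k (real n) / FF k (real n - 1) - 1"
    unfolding phi_eq z(3) by simp
  define d where "d y = 1/y + (\<Sum>j<k. TT j y)" for y
  have "\<exists>w. real n - 1 < w \<and> w < real n \<and> UU k (real n) - UU k (real n - 1) = (real n - (real n - 1)) * d w"
    unfolding d_def by (rule MVT2) (use x in \<open>auto intro!: UU_deriv\<close>)
  then obtain w where w: "real n - 1 < w" "UU k (real n) - UU k (real n - 1) = d w" by auto
  have w1: "w \<ge> 1" using w x by simp
  have "(\<Sum>j<k. TT j w) \<le> of_nat (card {..<k}) * (1/w)"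
    by (rule sum_bounded_above) (rule TT_le[OF w1])
  then have "d w \<le> (real k + 1) / w" unfolding d_def by (simp add: add_divide_distrib)
  also have "\<dots> \<le> (real k + 1) / (real n - 1)"
    using w x by (intro divide_left_mono) auto
  finally have B: "UU k (real n) - UU k (real n - 1) \<le> (real k + 1) / (real n - 1)" using w by simp
  have "FF k (real n) / FF k (real n - 1) = exp (UU k (real n) - UU k (real n - 1))"
    using p1 x by (simp add: UU_eq exp_diff)
  also have "\<dots> \<le> exp ((real k + 1) / (real n - 1))" using B by simp
  finally show ?thesis using A by simp
qed

theorem lemma2p4:
  fixes k :: nat
  assumes "k \<ge> 1"
  shows "(\<forall>n\<ge>2. phi k n > 0)
       \<and> (\<forall>n\<ge>2. phi k (Suc n) < phi k n)
       \<and> (\<lambda>n. phi k n) \<longlonglongrightarrow> 0"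
proof (intro conjI allI impI)
  fix n :: nat assume "n \<ge> 2"
  then show "phi k n > 0" using phi_pos assms by auto
next
  fix n :: nat assume n: "n \<ge> 2"
  have "FF k (real n + 1) * (ell k (real n + 1) - ell k (real n)) < FF k (real n) * (ell k (real n) - ell k (real n - 1))"
    by (rule phi_dec) (use assms n in auto)
  then show "phi k (Suc n) < phi k n" unfolding phi_eq by (simp add: add_ac)
next
  have l1: "(\<lambda>n. (real k + 1) / real n) \<longlonglongrightarrow> 0" by (rule lim_const_over_n)
  have l2: "(\<lambda>n. (real k + 1) / (real n - 1)) \<longlonglongrightarrow> 0"
    using l1 by (subst filterlim_sequentially_Suc[symmetric]) simp
  have l3: "(\<lambda>n. exp ((real k + 1) / (real n - 1)) - 1) \<longlonglongrightarrow> exp 0 - 1"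
    by (intro tendsto_diff tendsto_const tendsto_exp l2)
  show "(\<lambda>n. phi k n) \<longlonglongrightarrow> 0"
  proof (rule tendsto_sandwich[OF _ _ tendsto_const l3[simplified]])
    show "\<forall>\<^sub>F n in sequentially. 0 \<le> phi k n"
      using eventually_ge_at_top[of 2] by eventually_elim (use phi_pos assms in \<open>auto intro: less_imp_le\<close>)
    show "\<forall>\<^sub>F n in sequentially. phi k n \<le> exp ((real k + 1) / (real n - 1)) - 1"
      using eventually_ge_at_top[of 2] by eventually_elim (use phi_bound assms in auto)
  qed
qed

end
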